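(* Let $2\le r<s$ be coprime integers and let $\pi=\langle u,v\mid u^r=v^s\rangle$ be the group of the $(r,s)$ torus knot, with meridian $m=u^nv^{-k}$ and longitude $l=v^s m^{-rs}$, where $k,n\in\mathbb{Z}$ satisfy $-rk+sn=1$. Let $X,Y\in H[\pi]$ be the images of $m,l$. Then $Y\in H^+[\pi][X^{\pm1}]$; i.e. every torus knot satisfies the Brumfiel–Hilden condition.
   Context: For a group $\pi$, the Brumfiel–Hilden algebra is $H[\pi]:=\mathbb{C}[\pi]/I$, where $I$ is the two-sided ideal of the group algebra generated by all elements $g(h+h^{-1})-(h+h^{-1})g$ with $g,h\in\pi$. $H^+[\pi]\subset H[\pi]$ is the subalgebra generated by the images of all $g+g^{-1}$, $g\in\pi$. For an element $X\in H[\pi]$ which is the image of a group element, $H^+[\pi][X^{\pm1}]$ denotes the subalgebra of $H[\pi]$ generated by $H^+[\pi]$, $X$ and $X^{-1}$. A knot $K\subset S^3$ with group $\pi=\pi_1(S^3\setminus K)$ and standard (commuting) meridian $m$ and longitude $l$ is said to satisfy the Brumfiel–Hilden condition if the image $Y$ of $l$ in $H[\pi]$ lies in $H^+[\pi][X^{\pm1}]$, where $X$ is the image of $m$. The element $m$ does not depend on the choice of the solution $(k,n)$. *)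

theory Defs
  imports Complex_Main "HOL-Algebra.Group"
begin

type_synonym 'g galg = "'g \<Rightarrow> complex"

definition ga_elems :: "('g, 'b) monoid_scheme \<Rightarrow> 'g galg set" where
  "ga_elems G = {f. finite {x. f x \<noteq> 0} \<and> (\<forall>x. x \<notin> carrier G \<longrightarrow> f x = 0)}"

definition ga_delta :: "'g \<Rightarrow> 'g galg" where
  "ga_delta g = (\<lambda>x. if x = g then 1 else 0)"

definition ga_zero :: "'g galg" where
  "ga_zero = (\<lambda>x. 0)"

definition ga_add :: "'g galg \<Rightarrow> 'g galg \<Rightarrow> 'g galg" where
  "ga_add f h = (\<lambda>x. f x + h x)"

definition ga_smult :: "complex \<Rightarrow> 'g galg \<Rightarrow> 'g galg" where
  "ga_smult c f = (\<lambda>x. c * f x)"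

definition ga_mult :: "('g, 'b) monoid_scheme \<Rightarrow> 'g galg \<Rightarrow> 'g galg \<Rightarrow> 'g galg" where
  "ga_mult G f h = (\<lambda>x. \<Sum>(y, z) \<in> {(y, z). f y \<noteq> 0 \<and> h z \<noteq> 0 \<and> y \<otimes>\<^bsub>G\<^esub> z = x}. f y * h z)"

definition ga_plusinv :: "('g, 'b) monoid_scheme \<Rightarrow> 'g \<Rightarrow> 'g galg" where
  "ga_plusinv G g = ga_add (ga_delta g) (ga_delta (inv\<^bsub>G\<^esub> g))"

definition bh_gens :: "('g, 'b) monoid_scheme \<Rightarrow> 'g galg set" where
  "bh_gens G = {ga_add (ga_mult G (ga_delta g) (ga_plusinv G h))
                       (ga_smult (-1) (ga_mult G (ga_plusinv G h) (ga_delta g))) | g h.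
                g \<in> carrier G \<and> h \<in> carrier G}"

inductive_set ga_ideal :: "('g, 'b) monoid_scheme \<Rightarrow> 'g galg set \<Rightarrow> 'g galg set"
  for G :: "('g, 'b) monoid_scheme" and S :: "'g galg set" where
  zero: "ga_zero \<in> ga_ideal G S"
| gen: "x \<in> S \<Longrightarrow> x \<in> ga_ideal G S"
| add: "x \<in> ga_ideal G S \<Longrightarrow> y \<in> ga_ideal G S \<Longrightarrow> ga_add x y \<in> ga_ideal G S"
| lmult: "a \<in> ga_elems G \<Longrightarrow> x \<in> ga_ideal G S \<Longrightarrow> ga_mult G a x \<in> ga_ideal G S"
| rmult: "a \<in> ga_elems G \<Longrightarrow> x \<in> ga_ideal G S \<Longrightarrow> ga_mult G x a \<in> ga_ideal G S"

definition bh_ideal :: "('g, 'b) monoid_scheme \<Rightarrow> 'g galg set" where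
  "bh_ideal G = ga_ideal G (bh_gens G)"

definition bh_class :: "('g, 'b) monoid_scheme \<Rightarrow> 'g galg \<Rightarrow> 'g galg set" where
  "bh_class G f = {ga_add f i | i. i \<in> bh_ideal G}"

definition bh_carrier :: "('g, 'b) monoid_scheme \<Rightarrow> 'g galg set set" where
  "bh_carrier G = bh_class G ` ga_elems G"

definition bh_add :: "('g, 'b) monoid_scheme \<Rightarrow> 'g galg set \<Rightarrow> 'g galg set \<Rightarrow> 'g galg set" where
  "bh_add G A B = bh_class G (ga_add (SOME a. a \<in> A) (SOME b. b \<in> B))"

definition bh_mult :: "('g, 'b) monoid_scheme \<Rightarrow> 'g galg set \<Rightarrow> 'g galg set \<Rightarrow> 'g galg set" where
  "bh_mult G A B = bh_class G (ga_mult G (SOME a. a \<in> A) (SOME b. b \<in> B))"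

definition bh_smult :: "('g, 'b) monoid_scheme \<Rightarrow> complex \<Rightarrow> 'g galg set \<Rightarrow> 'g galg set" where
  "bh_smult G c A = bh_class G (ga_smult c (SOME a. a \<in> A))"

definition bh_one :: "('g, 'b) monoid_scheme \<Rightarrow> 'g galg set" where
  "bh_one G = bh_class G (ga_delta \<one>\<^bsub>G\<^esub>)"

inductive_set alg_gen :: "('a \<Rightarrow> 'a \<Rightarrow> 'a) \<Rightarrow> ('a \<Rightarrow> 'a \<Rightarrow> 'a) \<Rightarrow> (complex \<Rightarrow> 'a \<Rightarrow> 'a)
                          \<Rightarrow> 'a \<Rightarrow> 'a set \<Rightarrow> 'a set"
  for add :: "'a \<Rightarrow> 'a \<Rightarrow> 'a" and mult :: "'a \<Rightarrow> 'a \<Rightarrow> 'a" and smult :: "complex \<Rightarrow> 'a \<Rightarrow> 'a"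
    and one :: 'a and S :: "'a set" where
  gen: "x \<in> S \<Longrightarrow> x \<in> alg_gen add mult smult one S"
| one: "one \<in> alg_gen add mult smult one S"
| add: "x \<in> alg_gen add mult smult one S \<Longrightarrow> y \<in> alg_gen add mult smult one S
          \<Longrightarrow> add x y \<in> alg_gen add mult smult one S"
| mult: "x \<in> alg_gen add mult smult one S \<Longrightarrow> y \<in> alg_gen add mult smult one S
          \<Longrightarrow> mult x y \<in> alg_gen add mult smult one S"
| smult: "x \<in> alg_gen add mult smult one S \<Longrightarrow> smult c x \<in> alg_gen add mult smult one S"

definition bh_subalg :: "('g, 'b) monoid_scheme \<Rightarrow> 'g galg set set \<Rightarrow> 'g galg set set" where
  "bh_subalg G S = alg_gen (bh_add G) (bh_mult G) (bh_smult G) (bh_one G) S"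

definition bh_plus :: "('g, 'b) monoid_scheme \<Rightarrow> 'g galg set set" where
  "bh_plus G = bh_subalg G {bh_class G (ga_plusinv G g) | g. g \<in> carrier G}"

definition bh_condition :: "('g, 'b) monoid_scheme \<Rightarrow> 'g \<Rightarrow> 'g \<Rightarrow> bool" where
  "bh_condition G m l \<longleftrightarrow>
     bh_class G (ga_delta l) \<in>
       bh_subalg G (bh_plus G \<union> {bh_class G (ga_delta m), bh_class G (ga_delta (inv\<^bsub>G\<^esub> m))})"

text \<open>Words: letters (gen, inverted) with gen False = u, True = v.\<close>
type_synonym tk_word = "(bool \<times> bool) list"

definition tk_u :: "bool \<times> bool" where "tk_u = (False, False)"
definition tk_v :: "bool \<times> bool" where "tk_v = (True, False)"

definition tk_invl :: "bool \<times> bool \<Rightarrow> bool \<times> bool" where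
  "tk_invl x = (fst x, \<not> snd x)"

definition tk_winv :: "tk_word \<Rightarrow> tk_word" where
  "tk_winv w = rev (map tk_invl w)"

definition tk_lpow :: "bool \<times> bool \<Rightarrow> int \<Rightarrow> tk_word" where
  "tk_lpow x i = (if 0 \<le> i then replicate (nat i) x else replicate (nat (- i)) (tk_invl x))"

inductive tk_rel :: "nat \<Rightarrow> nat \<Rightarrow> tk_word \<Rightarrow> tk_word \<Rightarrow> bool" for r s :: nat where
  refl: "tk_rel r s w w"
| sym: "tk_rel r s w w' \<Longrightarrow> tk_rel r s w' w"
| trans: "tk_rel r s w w' \<Longrightarrow> tk_rel r s w' w'' \<Longrightarrow> tk_rel r s w w''"
| cancel: "tk_rel r s (a @ [x, tk_invl x] @ b) (a @ b)"
| relator: "tk_rel r s (a @ replicate r tk_u @ b) (a @ replicate s tk_v @ b)"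

definition tk_class :: "nat \<Rightarrow> nat \<Rightarrow> tk_word \<Rightarrow> tk_word set" where
  "tk_class r s w = {w'. tk_rel r s w w'}"

definition torus_knot_group :: "nat \<Rightarrow> nat \<Rightarrow> tk_word set monoid" where
  "torus_knot_group r s =
     \<lparr> carrier = range (tk_class r s),
       mult = (\<lambda>A B. tk_class r s ((SOME a. a \<in> A) @ (SOME b. b \<in> B))),
       one = tk_class r s [] \<rparr>"

definition tk_meridian_word :: "int \<Rightarrow> int \<Rightarrow> tk_word" where
  "tk_meridian_word k n = tk_lpow tk_u n @ tk_lpow tk_v (- k)"

definition tk_longitude_word :: "nat \<Rightarrow> nat \<Rightarrow> int \<Rightarrow> int \<Rightarrow> tk_word" where
  "tk_longitude_word r s k n =
     replicate s tk_v @ concat (replicate (r * s) (tk_winv (tk_meridian_word k n)))"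

end

theory Submission
  imports Defs "HOL-Algebra.QuotRing"
begin

lemma tk_rel_ctx:
  assumes "tk_rel r s w w'"
  shows "tk_rel r s (a @ w @ b) (a @ w' @ b)"
  using assms
proof (induction arbitrary: a b rule: tk_rel.induct)
  case (refl w) then show ?case by (rule tk_rel.refl)
next
  case (sym w w') then show ?case by (blast intro: tk_rel.sym)
next
  case (trans w w' w'') then show ?case by (blast intro: tk_rel.trans)
next
  case (cancel c x d)
  have "tk_rel r s ((a @ c) @ [x, tk_invl x] @ (d @ b)) ((a @ c) @ (d @ b))"
    by (rule tk_rel.cancel)
  then show ?case by simp
next
  case (relator c d)
  have "tk_rel r s ((a @ c) @ replicate r tk_u @ (d @ b)) ((a @ c) @ replicate s tk_v @ (d @ b))"
    by (rule tk_rel.relator)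
  then show ?case by simp
qed

lemma tk_rel_app:
  assumes "tk_rel r s w w'" "tk_rel r s x x'"
  shows "tk_rel r s (w @ x) (w' @ x')"
proof -
  have "tk_rel r s ([] @ w @ x) ([] @ w' @ x)" by (rule tk_rel_ctx[OF assms(1)])
  moreover have "tk_rel r s (w' @ x @ []) (w' @ x' @ [])" by (rule tk_rel_ctx[OF assms(2)])
  ultimately show ?thesis by (auto intro: tk_rel.trans)
qed

lemma tk_class_eq_iff: "tk_class r s w = tk_class r s w' \<longleftrightarrow> tk_rel r s w w'"
proof
  assume h: "tk_class r s w = tk_class r s w'"
  have "w' \<in> tk_class r s w'" by (simp add: tk_class_def tk_rel.refl)
  then have "w' \<in> tk_class r s w" using h by simp
  then show "tk_rel r s w w'" by (simp add: tk_class_def)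
next
  assume h: "tk_rel r s w w'"
  show "tk_class r s w = tk_class r s w'"
    unfolding tk_class_def using h by (auto intro: tk_rel.trans tk_rel.sym)
qed

lemma tk_class_mem: "w \<in> tk_class r s w"
  by (simp add: tk_class_def tk_rel.refl)

lemma some_class: "tk_rel r s w (SOME a. a \<in> tk_class r s w)"
proof -
  have "(SOME a. a \<in> tk_class r s w) \<in> tk_class r s w"
    by (rule someI) (rule tk_class_mem)
  then show ?thesis by (simp add: tk_class_def)
qed

abbreviation "TK r s \<equiv> torus_knot_group r s"

lemma tk_mult:
  "tk_class r s a \<otimes>\<^bsub>TK r s\<^esub> tk_class r s b = tk_class r s (a @ b)"
proof -
  have "tk_rel r s ((SOME x. x \<in> tk_class r s a) @ (SOME x. x \<in> tk_class r s b)) (a @ b)"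
    by (rule tk_rel_app; rule tk_rel.sym; rule some_class)
  then show ?thesis unfolding torus_knot_group_def
    by (simp add: tk_class_eq_iff tk_rel.sym)
qed

lemma tk_one: "\<one>\<^bsub>TK r s\<^esub> = tk_class r s []"
  by (simp add: torus_knot_group_def)

lemma tk_carrier: "carrier (TK r s) = range (tk_class r s)"
  by (simp add: torus_knot_group_def)

lemma tk_invl_invl [simp]: "tk_invl (tk_invl x) = x"
  by (simp add: tk_invl_def)

lemma tk_rel_cancel2: "tk_rel r s ([x, tk_invl x]) []"
  using tk_rel.cancel[of r s "[]" x "[]"] by simp

lemma tk_rel_winv: "tk_rel r s (w @ tk_winv w) []"
proof (induction w)
  case Nil then show ?case by (simp add: tk_winv_def tk_rel.refl)
next
  case (Cons x w)
  have e: "(x # w) @ tk_winv (x # w) = [x] @ (w @ tk_winv w) @ [tk_invl x]"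
    by (simp add: tk_winv_def)
  have "tk_rel r s ([x] @ (w @ tk_winv w) @ [tk_invl x]) ([x] @ [] @ [tk_invl x])"
    by (rule tk_rel_ctx[OF Cons])
  moreover have "tk_rel r s ([x] @ [] @ [tk_invl x]) []" using tk_rel_cancel2 by simp
  ultimately have "tk_rel r s ([x] @ (w @ tk_winv w) @ [tk_invl x]) []" by (rule tk_rel.trans)
  then show ?case by (simp only: e)
qed

lemma tk_winv_winv [simp]: "tk_winv (tk_winv w) = w"
  by (simp add: tk_winv_def rev_map comp_def)

lemma tk_rel_winv2: "tk_rel r s (tk_winv w @ w) []"
  using tk_rel_winv[of r s "tk_winv w"] by simp

lemma tk_group: "group (TK r s)"
proof (rule groupI)
  fix x y assume "x \<in> carrier (TK r s)" "y \<in> carrier (TK r s)"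
  then obtain a b where "x = tk_class r s a" "y = tk_class r s b" by (auto simp: tk_carrier)
  then show "x \<otimes>\<^bsub>TK r s\<^esub> y \<in> carrier (TK r s)"
    by (simp add: tk_carrier tk_mult)
next
  show "\<one>\<^bsub>TK r s\<^esub> \<in> carrier (TK r s)" by (simp add: tk_carrier tk_one)
next
  fix x y z assume "x \<in> carrier (TK r s)" "y \<in> carrier (TK r s)" "z \<in> carrier (TK r s)"
  then obtain a b c where "x = tk_class r s a" "y = tk_class r s b" "z = tk_class r s c"
    by (auto simp: tk_carrier)
  then show "x \<otimes>\<^bsub>TK r s\<^esub> y \<otimes>\<^bsub>TK r s\<^esub> z = x \<otimes>\<^bsub>TK r s\<^esub> (y \<otimes>\<^bsub>TK r s\<^esub> z)"
    by (simp add: tk_mult)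
next
  fix x assume "x \<in> carrier (TK r s)"
  then obtain a where "x = tk_class r s a" by (auto simp: tk_carrier)
  then show "\<one>\<^bsub>TK r s\<^esub> \<otimes>\<^bsub>TK r s\<^esub> x = x"
    by (simp add: tk_mult tk_one)
next
  fix x assume "x \<in> carrier (TK r s)"
  then obtain w where w: "x = tk_class r s w" by (auto simp: tk_carrier)
  have "tk_class r s (tk_winv w) \<otimes>\<^bsub>TK r s\<^esub> x = \<one>\<^bsub>TK r s\<^esub>"
    unfolding w tk_mult tk_one tk_class_eq_iff by (rule tk_rel_winv2)
  moreover have "tk_class r s (tk_winv w) \<in> carrier (TK r s)" by (simp add: tk_carrier)
  ultimately show "\<exists>y\<in>carrier (TK r s). y \<otimes>\<^bsub>TK r s\<^esub> x = \<one>\<^bsub>TK r s\<^esub>"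
    by blast
qed

lemma tk_inv: "inv\<^bsub>TK r s\<^esub> (tk_class r s w) = tk_class r s (tk_winv w)"
proof -
  interpret group "TK r s" by (rule tk_group)
  show ?thesis
  proof (rule inv_equality)
    show "tk_class r s (tk_winv w) \<otimes>\<^bsub>TK r s\<^esub> tk_class r s w = \<one>\<^bsub>TK r s\<^esub>"
      unfolding tk_mult tk_one tk_class_eq_iff by (rule tk_rel_winv2)
  qed (simp_all add: tk_carrier)
qed

lemma tk_pow: "tk_class r s w [^]\<^bsub>TK r s\<^esub> (j::nat) = tk_class r s (concat (replicate j w))"
proof (induction j)
  case 0 then show ?case by (simp add: tk_one)
next
  case (Suc j)
  have e: "concat (replicate j w) @ w = w @ concat (replicate j w)"
    by (induction j) auto
  show ?case using Suc by (simp add: tk_mult e)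
qed

lemma tk_rep_pow: "tk_class r s (replicate j y) = tk_class r s [y] [^]\<^bsub>TK r s\<^esub> (j::nat)"
proof -
  have rep: "concat (replicate j [y]) = replicate j y"
    by (induction j) auto
  show ?thesis by (simp only: tk_pow rep)
qed

lemma tk_lpow: "tk_class r s (tk_lpow x i) = tk_class r s [x] [^]\<^bsub>TK r s\<^esub> i"
proof -
  interpret group "TK r s" by (rule tk_group)
  have c: "tk_class r s [x] \<in> carrier (TK r s)" by (simp add: tk_carrier)
  show ?thesis
  proof (cases "0 \<le> i")
    case True
    then have "tk_class r s (tk_lpow x i) = tk_class r s [x] [^]\<^bsub>TK r s\<^esub> nat i"
      by (simp only: tk_lpow_def if_True tk_rep_pow)
    also have "\<dots> = tk_class r s [x] [^]\<^bsub>TK r s\<^esub> i" using True by (rule pow_nat)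
    finally show ?thesis .
  next
    case False
    have "tk_class r s [x] [^]\<^bsub>TK r s\<^esub> i = inv\<^bsub>TK r s\<^esub> (tk_class r s [x] [^]\<^bsub>TK r s\<^esub> nat (-i))"
      using False by (subst int_pow_def2) simp
    also have "\<dots> = (inv\<^bsub>TK r s\<^esub> tk_class r s [x]) [^]\<^bsub>TK r s\<^esub> nat (-i)"
      by (rule nat_pow_inv[symmetric, OF c])
    also have "inv\<^bsub>TK r s\<^esub> tk_class r s [x] = tk_class r s [tk_invl x]"
      by (simp add: tk_inv tk_winv_def)
    also have "tk_class r s [tk_invl x] [^]\<^bsub>TK r s\<^esub> nat (-i) = tk_class r s (replicate (nat (-i)) (tk_invl x))"
      by (simp only: tk_rep_pow)
    finally show ?thesis using False by (simp add: tk_lpow_def)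
  qed
qed


definition supp :: "'g galg \<Rightarrow> 'g set" where "supp f = {x. f x \<noteq> 0}"

definition RG :: "('g, 'b) monoid_scheme \<Rightarrow> 'g galg ring" where
  "RG G = \<lparr>carrier = ga_elems G, mult = ga_mult G, one = ga_delta \<one>\<^bsub>G\<^esub>, zero = ga_zero, add = ga_add\<rparr>"

lemma RG_simps [simp]:
  "carrier (RG G) = ga_elems G" "mult (RG G) = ga_mult G" "one (RG G) = ga_delta \<one>\<^bsub>G\<^esub>"
  "zero (RG G) = ga_zero" "add (RG G) = ga_add"
  by (simp_all add: RG_def)

lemma ga_delta_apply [simp]: "ga_delta g x = (if x = g then 1 else 0)"
  by (simp add: ga_delta_def)

lemma ga_elems_iff: "f \<in> ga_elems G \<longleftrightarrow> finite (supp f) \<and> supp f \<subseteq> carrier G"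
  by (auto simp: ga_elems_def supp_def)

lemma ga_mult_alt:
  assumes "finite A" "supp f \<subseteq> A" "finite B" "supp h \<subseteq> B"
  shows "ga_mult G f h x = (\<Sum>y\<in>A. \<Sum>z\<in>B. if y \<otimes>\<^bsub>G\<^esub> z = x then f y * h z else 0)"
proof -
  have "(\<Sum>y\<in>A. \<Sum>z\<in>B. if y \<otimes>\<^bsub>G\<^esub> z = x then f y * h z else 0)
      = (\<Sum>(y,z)\<in>A\<times>B. if y \<otimes>\<^bsub>G\<^esub> z = x then f y * h z else 0)"
    by (rule sum.cartesian_product)
  also have "\<dots> = (\<Sum>(y, z) \<in> {(y, z). f y \<noteq> 0 \<and> h z \<noteq> 0 \<and> y \<otimes>\<^bsub>G\<^esub> z = x}. f y * h z)"
    by (rule sum.mono_neutral_cong_right) (use assms in \<open>auto simp: supp_def split: if_splits\<close>)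
  finally show ?thesis by (simp add: ga_mult_def)
qed

lemma sum_collapse:
  assumes "finite W" "p \<in> W"
  shows "(\<Sum>w\<in>W. if p = w \<and> Q w then K w else 0) = (if Q p then K p else 0)"
proof -
  have "(\<Sum>w\<in>W. if p = w \<and> Q w then K w else 0) = (\<Sum>w\<in>W. if p = w then (if Q w then K w else 0) else 0)"
    by (rule sum.cong) auto
  also have "\<dots> = (if Q p then K p else 0)" using assms by (simp add: sum.delta)
  finally show ?thesis .
qed

context group
begin

lemma supp_mult: "supp (ga_mult G f h) \<subseteq> (\<lambda>(y,z). y \<otimes> z) ` (supp f \<times> supp h)"
proof
  fix x assume "x \<in> supp (ga_mult G f h)"
  then have "ga_mult G f h x \<noteq> 0" by (simp add: supp_def)
  then have "{(y, z). f y \<noteq> 0 \<and> h z \<noteq> 0 \<and> y \<otimes> z = x} \<noteq> {}"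
    unfolding ga_mult_def by (metis (no_types, lifting) sum.empty)
  then show "x \<in> (\<lambda>(y,z). y \<otimes> z) ` (supp f \<times> supp h)"
    by (auto simp: supp_def image_iff)
qed

lemma elems_mult: "f \<in> ga_elems G \<Longrightarrow> h \<in> ga_elems G \<Longrightarrow> ga_mult G f h \<in> ga_elems G"
  unfolding ga_elems_iff
proof (intro conjI)
  assume a: "finite (supp f) \<and> supp f \<subseteq> carrier G" "finite (supp h) \<and> supp h \<subseteq> carrier G"
  show "finite (supp (ga_mult G f h))"
    by (rule finite_subset[OF supp_mult]) (use a in auto)
  show "supp (ga_mult G f h) \<subseteq> carrier G"
    using supp_mult a by fastforce
qed

lemma elems_add: "f \<in> ga_elems G \<Longrightarrow> h \<in> ga_elems G \<Longrightarrow> ga_add f h \<in> ga_elems G"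
proof -
  assume a: "f \<in> ga_elems G" "h \<in> ga_elems G"
  have "supp (ga_add f h) \<subseteq> supp f \<union> supp h" by (auto simp: supp_def ga_add_def)
  then show ?thesis using a unfolding ga_elems_iff by (meson finite_Un finite_subset le_sup_iff order_trans)
qed

lemma elems_smult: "f \<in> ga_elems G \<Longrightarrow> ga_smult c f \<in> ga_elems G"
proof -
  assume a: "f \<in> ga_elems G"
  have "supp (ga_smult c f) \<subseteq> supp f" by (auto simp: supp_def ga_smult_def)
  then show ?thesis using a unfolding ga_elems_iff by (meson finite_subset order_trans)
qed

lemma elems_zero: "ga_zero \<in> ga_elems G"
  by (simp add: ga_elems_def ga_zero_def)

lemma elems_delta: "g \<in> carrier G \<Longrightarrow> ga_delta g \<in> ga_elems G"
  by (simp add: ga_elems_def ga_delta_def)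

lemma supp_delta: "supp (ga_delta g) \<subseteq> {g}"
  by (auto simp: supp_def ga_delta_def)

lemma delta_mult: "g \<in> carrier G \<Longrightarrow> h \<in> carrier G \<Longrightarrow>
    ga_mult G (ga_delta g) (ga_delta h) = ga_delta (g \<otimes> h)"
  by (rule ext, subst ga_mult_alt[where A="{g}" and B="{h}"]) (auto simp: supp_delta supp_def ga_delta_def)

lemma ga_l_one: "f \<in> ga_elems G \<Longrightarrow> ga_mult G (ga_delta \<one>) f = f"
proof (rule ext)
  fix x assume f: "f \<in> ga_elems G"
  then have fin: "finite (supp f)" and sub: "supp f \<subseteq> carrier G" by (auto simp: ga_elems_iff)
  have "ga_mult G (ga_delta \<one>) f x = (\<Sum>y\<in>{\<one>}. \<Sum>z\<in>supp f. if y \<otimes> z = x then ga_delta \<one> y * f z else 0)"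
    by (rule ga_mult_alt) (simp_all add: fin supp_delta)
  also have "\<dots> = (\<Sum>z\<in>supp f. if \<one> \<otimes> z = x then f z else 0)"
    by (simp cong: if_cong)
  also have "\<dots> = (\<Sum>z\<in>supp f. if x = z then f z else 0)"
    by (rule sum.cong) (use sub in auto)
  also have "\<dots> = f x" using fin by (simp add: sum.delta) (simp add: supp_def)
  finally show "ga_mult G (ga_delta \<one>) f x = f x" .
qed

lemma ga_r_one: "f \<in> ga_elems G \<Longrightarrow> ga_mult G f (ga_delta \<one>) = f"
proof (rule ext)
  fix x assume f: "f \<in> ga_elems G"
  then have fin: "finite (supp f)" and sub: "supp f \<subseteq> carrier G" by (auto simp: ga_elems_iff)
  have "ga_mult G f (ga_delta \<one>) x = (\<Sum>z\<in>supp f. \<Sum>y\<in>{\<one>}. if z \<otimes> y = x then f z * ga_delta \<one> y else 0)"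
    by (rule ga_mult_alt) (simp_all add: fin supp_delta)
  also have "\<dots> = (\<Sum>z\<in>supp f. if z \<otimes> \<one> = x then f z else 0)"
    by (simp cong: if_cong)
  also have "\<dots> = (\<Sum>z\<in>supp f. if x = z then f z else 0)"
    by (rule sum.cong) (use sub in auto)
  also have "\<dots> = f x" using fin by (simp add: sum.delta) (simp add: supp_def)
  finally show "ga_mult G f (ga_delta \<one>) x = f x" .
qed

lemma ga_l_distr:
  assumes "f \<in> ga_elems G" "g \<in> ga_elems G" "h \<in> ga_elems G"
  shows "ga_mult G (ga_add f g) h = ga_add (ga_mult G f h) (ga_mult G g h)"
proof (rule ext)
  fix x
  have fin: "finite (supp f \<union> supp g)" "finite (supp h)" using assms by (auto simp: ga_elems_iff)
  have s: "supp (ga_add f g) \<subseteq> supp f \<union> supp g" by (auto simp: supp_def ga_add_def)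
  show "ga_mult G (ga_add f g) h x = ga_add (ga_mult G f h) (ga_mult G g h) x"
    unfolding ga_add_def[of "ga_mult G f h"]
    apply (subst (1 2 3) ga_mult_alt[where A="supp f \<union> supp g" and B="supp h"])
    using fin s by (auto simp: ga_add_def sum.distrib[symmetric] distrib_right intro!: sum.cong)
qed

lemma ga_r_distr:
  assumes "f \<in> ga_elems G" "g \<in> ga_elems G" "h \<in> ga_elems G"
  shows "ga_mult G h (ga_add f g) = ga_add (ga_mult G h f) (ga_mult G h g)"
proof (rule ext)
  fix x
  have fin: "finite (supp f \<union> supp g)" "finite (supp h)" using assms by (auto simp: ga_elems_iff)
  have s: "supp (ga_add f g) \<subseteq> supp f \<union> supp g" by (auto simp: supp_def ga_add_def)
  show "ga_mult G h (ga_add f g) x = ga_add (ga_mult G h f) (ga_mult G h g) x"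
    unfolding ga_add_def[of "ga_mult G h f"]
    apply (subst (1 2 3) ga_mult_alt[where B="supp f \<union> supp g" and A="supp h"])
    using fin s by (auto simp: ga_add_def sum.distrib[symmetric] distrib_left intro!: sum.cong)
qed

end

lemma sum_swap4:
  "(\<Sum>w\<in>W. \<Sum>c\<in>C. \<Sum>a\<in>A. \<Sum>b\<in>B. K w c a b) = (\<Sum>a\<in>A. \<Sum>b\<in>B. \<Sum>c\<in>C. \<Sum>w\<in>W. K w c a b)"
proof -
  have "(\<Sum>w\<in>W. \<Sum>c\<in>C. \<Sum>a\<in>A. \<Sum>b\<in>B. K w c a b) = (\<Sum>w\<in>W. \<Sum>a\<in>A. \<Sum>c\<in>C. \<Sum>b\<in>B. K w c a b)"
    by (rule sum.cong[OF HOL.refl], rule sum.swap)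
  also have "\<dots> = (\<Sum>w\<in>W. \<Sum>a\<in>A. \<Sum>b\<in>B. \<Sum>c\<in>C. K w c a b)"
    by (rule sum.cong[OF HOL.refl], rule sum.cong[OF HOL.refl], rule sum.swap)
  also have "\<dots> = (\<Sum>a\<in>A. \<Sum>w\<in>W. \<Sum>b\<in>B. \<Sum>c\<in>C. K w c a b)"
    by (rule sum.swap)
  also have "\<dots> = (\<Sum>a\<in>A. \<Sum>b\<in>B. \<Sum>w\<in>W. \<Sum>c\<in>C. K w c a b)"
    by (rule sum.cong[OF HOL.refl], rule sum.swap)
  also have "\<dots> = (\<Sum>a\<in>A. \<Sum>b\<in>B. \<Sum>c\<in>C. \<Sum>w\<in>W. K w c a b)"
    by (rule sum.cong[OF HOL.refl], rule sum.cong[OF HOL.refl], rule sum.swap)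
  finally show ?thesis .
qed

lemma sum_swap4':
  "(\<Sum>a\<in>A. \<Sum>w\<in>W. \<Sum>b\<in>B. \<Sum>c\<in>C. K a w b c) = (\<Sum>a\<in>A. \<Sum>b\<in>B. \<Sum>c\<in>C. \<Sum>w\<in>W. K a w b c)"
proof -
  have "(\<Sum>a\<in>A. \<Sum>w\<in>W. \<Sum>b\<in>B. \<Sum>c\<in>C. K a w b c) = (\<Sum>a\<in>A. \<Sum>b\<in>B. \<Sum>w\<in>W. \<Sum>c\<in>C. K a w b c)"
    by (rule sum.cong[OF HOL.refl], rule sum.swap)
  also have "\<dots> = (\<Sum>a\<in>A. \<Sum>b\<in>B. \<Sum>c\<in>C. \<Sum>w\<in>W. K a w b c)"
    by (rule sum.cong[OF HOL.refl], rule sum.cong[OF HOL.refl], rule sum.swap)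
  finally show ?thesis .
qed

context group
begin

lemma ga_assoc:
  assumes f: "f \<in> ga_elems G" and g: "g \<in> ga_elems G" and h: "h \<in> ga_elems G"
  shows "ga_mult G (ga_mult G f g) h = ga_mult G f (ga_mult G g h)"
proof (rule ext)
  fix x
  define A where "A = supp f"
  define B where "B = supp g"
  define C where "C = supp h"
  have fin: "finite A" "finite B" "finite C" and car: "A \<subseteq> carrier G" "B \<subseteq> carrier G" "C \<subseteq> carrier G"
    using f g h by (auto simp: ga_elems_iff A_def B_def C_def)
  define AB where "AB = (\<lambda>(y,z). y \<otimes> z) ` (A \<times> B)"
  define BC where "BC = (\<lambda>(y,z). y \<otimes> z) ` (B \<times> C)"
  have finAB: "finite AB" "finite BC" using fin by (simp_all add: AB_def BC_def)
  have sAB: "supp (ga_mult G f g) \<subseteq> AB" using supp_mult by (simp add: AB_def A_def B_def)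
  have sBC: "supp (ga_mult G g h) \<subseteq> BC" using supp_mult by (simp add: BC_def C_def B_def)
  have fg: "ga_mult G f g w = (\<Sum>a\<in>A. \<Sum>b\<in>B. if a \<otimes> b = w then f a * g b else 0)" for w
    by (rule ga_mult_alt) (use fin in \<open>simp_all add: A_def B_def\<close>)
  have gh: "ga_mult G g h w = (\<Sum>b\<in>B. \<Sum>c\<in>C. if b \<otimes> c = w then g b * h c else 0)" for w
    by (rule ga_mult_alt) (use fin in \<open>simp_all add: C_def B_def\<close>)
  have "ga_mult G (ga_mult G f g) h x = (\<Sum>w\<in>AB. \<Sum>c\<in>C. if w \<otimes> c = x then ga_mult G f g w * h c else 0)"
    by (rule ga_mult_alt) (use finAB sAB fin in \<open>simp_all add: C_def\<close>)
  also have "\<dots> = (\<Sum>w\<in>AB. \<Sum>c\<in>C. \<Sum>a\<in>A. \<Sum>b\<in>B. if a \<otimes> b = w \<and> w \<otimes> c = x then f a * g b * h c else 0)"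
    unfolding fg by (auto simp: sum_distrib_right intro!: sum.cong)
  also have "\<dots> = (\<Sum>a\<in>A. \<Sum>b\<in>B. \<Sum>c\<in>C. \<Sum>w\<in>AB. if a \<otimes> b = w \<and> w \<otimes> c = x then f a * g b * h c else 0)"
    by (rule sum_swap4)
  also have "\<dots> = (\<Sum>a\<in>A. \<Sum>b\<in>B. \<Sum>c\<in>C. if (a \<otimes> b) \<otimes> c = x then f a * g b * h c else 0)"
  proof (intro sum.cong HOL.refl)
    fix a b c assume "a \<in> A" "b \<in> B" "c \<in> C"
    then have "a \<otimes> b \<in> AB" by (auto simp: AB_def)
    then show "(\<Sum>w\<in>AB. if a \<otimes> b = w \<and> w \<otimes> c = x then f a * g b * h c else 0) =
      (if (a \<otimes> b) \<otimes> c = x then f a * g b * h c else 0)"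
      by (rule sum_collapse[OF finAB(1)])
  qed
  also have "\<dots> = (\<Sum>a\<in>A. \<Sum>b\<in>B. \<Sum>c\<in>C. if a \<otimes> (b \<otimes> c) = x then f a * (g b * h c) else 0)"
  proof (intro sum.cong HOL.refl)
    fix a b c assume "a \<in> A" "b \<in> B" "c \<in> C"
    then have "(a \<otimes> b) \<otimes> c = a \<otimes> (b \<otimes> c)" using car by (intro m_assoc) auto
    then show "(if (a \<otimes> b) \<otimes> c = x then f a * g b * h c else 0) =
      (if a \<otimes> (b \<otimes> c) = x then f a * (g b * h c) else 0)" by (simp add: mult.assoc)
  qed
  also have "\<dots> = (\<Sum>a\<in>A. \<Sum>b\<in>B. \<Sum>c\<in>C. \<Sum>w\<in>BC. if b \<otimes> c = w \<and> a \<otimes> w = x then f a * (g b * h c) else 0)"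
  proof (intro sum.cong HOL.refl)
    fix a b c assume "a \<in> A" "b \<in> B" "c \<in> C"
    then have "b \<otimes> c \<in> BC" by (auto simp: BC_def)
    then show "(if a \<otimes> (b \<otimes> c) = x then f a * (g b * h c) else 0) =
      (\<Sum>w\<in>BC. if b \<otimes> c = w \<and> a \<otimes> w = x then f a * (g b * h c) else 0)"
      by (rule sum_collapse[OF finAB(2), symmetric])
  qed
  also have "\<dots> = (\<Sum>a\<in>A. \<Sum>w\<in>BC. \<Sum>b\<in>B. \<Sum>c\<in>C. if b \<otimes> c = w \<and> a \<otimes> w = x then f a * (g b * h c) else 0)"
    by (rule sum_swap4'[symmetric])
  also have "\<dots> = (\<Sum>a\<in>A. \<Sum>w\<in>BC. if a \<otimes> w = x then f a * ga_mult G g h w else 0)"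
    unfolding gh by (auto simp: sum_distrib_left intro!: sum.cong)
  also have "\<dots> = ga_mult G f (ga_mult G g h) x"
    by (rule ga_mult_alt[symmetric]) (use finAB sBC fin in \<open>simp_all add: A_def\<close>)
  finally show "ga_mult G (ga_mult G f g) h x = ga_mult G f (ga_mult G g h) x" .
qed

end

context group
begin

lemma ga_smult_mult:
  assumes "f \<in> ga_elems G" "h \<in> ga_elems G"
  shows "ga_mult G (ga_smult c f) h = ga_smult c (ga_mult G f h)"
proof (rule ext)
  fix x
  have fin: "finite (supp f)" "finite (supp h)" using assms by (auto simp: ga_elems_iff)
  have s: "supp (ga_smult c f) \<subseteq> supp f" by (auto simp: supp_def ga_smult_def)
  show "ga_mult G (ga_smult c f) h x = ga_smult c (ga_mult G f h) x"
    unfolding ga_smult_def[of c "ga_mult G f h"]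
    apply (subst (1 2) ga_mult_alt[where A="supp f" and B="supp h"])
    using fin s by (auto simp: ga_smult_def sum_distrib_left mult.assoc intro!: sum.cong)
qed

lemma elems_uminus: "f \<in> ga_elems G \<Longrightarrow> (\<lambda>x. - f x) \<in> ga_elems G"
  using elems_smult[of f "-1"] by (simp add: ga_smult_def)

lemma ring_RG: "ring (RG G)"
proof (rule ringI)
  show "abelian_group (RG G)"
  proof (rule abelian_groupI)
    fix x y z assume x: "x \<in> carrier (RG G)" and y: "y \<in> carrier (RG G)" and z: "z \<in> carrier (RG G)"
    show "x \<oplus>\<^bsub>RG G\<^esub> y \<in> carrier (RG G)" using x y by (simp add: elems_add)
    show "x \<oplus>\<^bsub>RG G\<^esub> y \<oplus>\<^bsub>RG G\<^esub> z = x \<oplus>\<^bsub>RG G\<^esub> (y \<oplus>\<^bsub>RG G\<^esub> z)"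
      by (simp add: ga_add_def add.assoc)
  next
    fix x y assume "x \<in> carrier (RG G)" "y \<in> carrier (RG G)"
    show "x \<oplus>\<^bsub>RG G\<^esub> y = y \<oplus>\<^bsub>RG G\<^esub> x" by (simp add: ga_add_def add.commute)
  next
    show "\<zero>\<^bsub>RG G\<^esub> \<in> carrier (RG G)" by (simp add: elems_zero)
  next
    fix x assume "x \<in> carrier (RG G)"
    show "\<zero>\<^bsub>RG G\<^esub> \<oplus>\<^bsub>RG G\<^esub> x = x" by (simp add: ga_add_def ga_zero_def)
  next
    fix x assume x: "x \<in> carrier (RG G)"
    show "\<exists>y\<in>carrier (RG G). y \<oplus>\<^bsub>RG G\<^esub> x = \<zero>\<^bsub>RG G\<^esub>"
      by (rule bexI[of _ "ga_smult (-1) x"]) (use x in \<open>auto simp: ga_add_def ga_zero_def ga_smult_def elems_smult elems_uminus\<close>)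
  qed
next
  show "monoid (RG G)"
    by (rule monoidI) (simp_all add: elems_mult elems_delta ga_assoc ga_l_one ga_r_one)
next
  fix x y z assume "x \<in> carrier (RG G)" "y \<in> carrier (RG G)" "z \<in> carrier (RG G)"
  then show "(x \<oplus>\<^bsub>RG G\<^esub> y) \<otimes>\<^bsub>RG G\<^esub> z = x \<otimes>\<^bsub>RG G\<^esub> z \<oplus>\<^bsub>RG G\<^esub> y \<otimes>\<^bsub>RG G\<^esub> z"
    "z \<otimes>\<^bsub>RG G\<^esub> (x \<oplus>\<^bsub>RG G\<^esub> y) = z \<otimes>\<^bsub>RG G\<^esub> x \<oplus>\<^bsub>RG G\<^esub> z \<otimes>\<^bsub>RG G\<^esub> y"
    by (simp_all add: ga_l_distr ga_r_distr)
qed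

lemma RG_minus: "f \<in> ga_elems G \<Longrightarrow> \<ominus>\<^bsub>RG G\<^esub> f = ga_smult (-1) f"
proof -
  assume f: "f \<in> ga_elems G"
  interpret R: ring "RG G" by (rule ring_RG)
  show ?thesis
    by (rule R.minus_equality) (use f in \<open>auto simp: ga_add_def ga_zero_def ga_smult_def elems_smult elems_uminus\<close>)
qed

lemma plusinv_elems: "g \<in> carrier G \<Longrightarrow> ga_plusinv G g \<in> ga_elems G"
  by (simp add: ga_plusinv_def elems_add elems_delta)

lemma gens_elems: "bh_gens G \<subseteq> ga_elems G"
  by (auto simp: bh_gens_def intro!: elems_add elems_mult elems_smult elems_delta plusinv_elems)

lemma ideal_elems: "x \<in> ga_ideal G (bh_gens G) \<Longrightarrow> x \<in> ga_elems G"
  by (induction rule: ga_ideal.induct) (use gens_elems in \<open>auto intro: elems_zero elems_add elems_mult\<close>)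

lemma bh_ideal_ideal: "ideal (bh_ideal G) (RG G)"
proof (rule idealI)
  show "ring (RG G)" by (rule ring_RG)
  interpret R: ring "RG G" by (rule ring_RG)
  show "subgroup (bh_ideal G) (add_monoid (RG G))"
  proof (rule group.subgroupI[OF R.a_group])
    show "bh_ideal G \<subseteq> carrier (add_monoid (RG G))"
      using ideal_elems by (auto simp: bh_ideal_def)
    show "bh_ideal G \<noteq> {}" using ga_ideal.zero by (auto simp: bh_ideal_def)
  next
    fix a assume a: "a \<in> bh_ideal G"
    then have ae: "a \<in> ga_elems G" using ideal_elems by (simp add: bh_ideal_def)
    have "inv\<^bsub>add_monoid (RG G)\<^esub> a = \<ominus>\<^bsub>RG G\<^esub> a" by (simp add: a_inv_def)
    also have "\<dots> = ga_smult (-1) a" using ae by (rule RG_minus)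
    also have "\<dots> = ga_mult G (ga_smult (-1) (ga_delta \<one>)) a"
      using ae by (simp add: ga_smult_mult elems_delta ga_l_one)
    finally show "inv\<^bsub>add_monoid (RG G)\<^esub> a \<in> bh_ideal G"
      using a unfolding bh_ideal_def by (simp add: ga_ideal.lmult elems_smult elems_delta)
  next
    fix a b assume "a \<in> bh_ideal G" "b \<in> bh_ideal G"
    then show "a \<otimes>\<^bsub>add_monoid (RG G)\<^esub> b \<in> bh_ideal G"
      by (simp add: bh_ideal_def ga_ideal.add)
  qed
next
  fix a x assume "a \<in> bh_ideal G" "x \<in> carrier (RG G)"
  then show "x \<otimes>\<^bsub>RG G\<^esub> a \<in> bh_ideal G" "a \<otimes>\<^bsub>RG G\<^esub> x \<in> bh_ideal G"
    by (simp_all add: bh_ideal_def ga_ideal.lmult ga_ideal.rmult)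
qed

lemma bh_class_coset: "bh_class G f = bh_ideal G +>\<^bsub>RG G\<^esub> f"
  unfolding bh_class_def a_r_coset_def' by (auto simp: ga_add_def add.commute)

end


context group
begin

abbreviation "QH \<equiv> RG G Quot bh_ideal G"

lemma QH_ring: "ring QH"
  using bh_ideal_ideal by (rule ideal.quotient_is_ring)

lemma QH_hom: "ring_hom_ring (RG G) QH ((+>\<^bsub>RG G\<^esub>) (bh_ideal G))"
  using bh_ideal_ideal by (rule ideal.rcos_ring_hom_ring)

lemma class_carrier: "f \<in> ga_elems G \<Longrightarrow> bh_class G f \<in> carrier QH"
proof -
  assume f: "f \<in> ga_elems G"
  interpret h: ring_hom_ring "RG G" QH "(+>\<^bsub>RG G\<^esub>) (bh_ideal G)" by (rule QH_hom)
  show ?thesis using f by (simp add: bh_class_coset)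
qed

lemma some_rep:
  assumes A: "A \<in> carrier QH"
  shows "(SOME x. x \<in> A) \<in> ga_elems G" "bh_class G (SOME x. x \<in> A) = A"
proof -
  interpret I: ideal "bh_ideal G" "RG G" by (rule bh_ideal_ideal)
  obtain a where a: "a \<in> ga_elems G" "A = bh_ideal G +>\<^bsub>RG G\<^esub> a"
    using A by (auto simp: FactRing_def A_RCOSETS_def' )
  have "a \<in> A" using a I.a_rcos_self by simp
  then have x: "(SOME x. x \<in> A) \<in> A" by (metis someI)
  have sub: "A \<subseteq> ga_elems G"
    using a I.a_subset by (auto simp: a_r_coset_def' intro: elems_add)
  show "(SOME x. x \<in> A) \<in> ga_elems G" using x sub by auto
  have "bh_ideal G +>\<^bsub>RG G\<^esub> a = bh_ideal G +>\<^bsub>RG G\<^esub> (SOME x. x \<in> A)"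
    by (rule I.a_repr_independence') (use x a in auto)
  then show "bh_class G (SOME x. x \<in> A) = A" using a by (simp add: bh_class_coset)
qed

lemma bh_add_Q: "A \<in> carrier QH \<Longrightarrow> B \<in> carrier QH \<Longrightarrow> bh_add G A B = A \<oplus>\<^bsub>QH\<^esub> B"
proof -
  assume A: "A \<in> carrier QH" and B: "B \<in> carrier QH"
  interpret h: ring_hom_ring "RG G" QH "(+>\<^bsub>RG G\<^esub>) (bh_ideal G)" by (rule QH_hom)
  have "bh_add G A B = bh_ideal G +>\<^bsub>RG G\<^esub> ((SOME x. x \<in> A) \<oplus>\<^bsub>RG G\<^esub> (SOME x. x \<in> B))"
    by (simp add: bh_add_def bh_class_coset)
  also have "\<dots> = bh_class G (SOME x. x \<in> A) \<oplus>\<^bsub>QH\<^esub> bh_class G (SOME x. x \<in> B)"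
    using some_rep[OF A] some_rep[OF B] h.hom_add[of "SOME x. x \<in> A" "SOME x. x \<in> B"]
    by (simp add: bh_class_coset)
  finally show ?thesis using some_rep[OF A] some_rep[OF B] by simp
qed

lemma bh_mult_Q: "A \<in> carrier QH \<Longrightarrow> B \<in> carrier QH \<Longrightarrow> bh_mult G A B = A \<otimes>\<^bsub>QH\<^esub> B"
proof -
  assume A: "A \<in> carrier QH" and B: "B \<in> carrier QH"
  interpret h: ring_hom_ring "RG G" QH "(+>\<^bsub>RG G\<^esub>) (bh_ideal G)" by (rule QH_hom)
  have "bh_mult G A B = bh_ideal G +>\<^bsub>RG G\<^esub> ((SOME x. x \<in> A) \<otimes>\<^bsub>RG G\<^esub> (SOME x. x \<in> B))"
    by (simp add: bh_mult_def bh_class_coset)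
  also have "\<dots> = bh_class G (SOME x. x \<in> A) \<otimes>\<^bsub>QH\<^esub> bh_class G (SOME x. x \<in> B)"
    using some_rep[OF A] some_rep[OF B] h.hom_mult[of "SOME x. x \<in> A" "SOME x. x \<in> B"]
    by (simp add: bh_class_coset)
  finally show ?thesis using some_rep[OF A] some_rep[OF B] by simp
qed

lemma bh_smult_neg: "A \<in> carrier QH \<Longrightarrow> bh_smult G (-1) A = \<ominus>\<^bsub>QH\<^esub> A"
proof -
  assume A: "A \<in> carrier QH"
  interpret h: ring_hom_ring "RG G" QH "(+>\<^bsub>RG G\<^esub>) (bh_ideal G)" by (rule QH_hom)
  have "bh_smult G (-1) A = bh_ideal G +>\<^bsub>RG G\<^esub> (\<ominus>\<^bsub>RG G\<^esub> (SOME x. x \<in> A))"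
    using some_rep[OF A] by (simp add: bh_smult_def bh_class_coset RG_minus)
  also have "\<dots> = \<ominus>\<^bsub>QH\<^esub> bh_class G (SOME x. x \<in> A)"
    using some_rep[OF A] by (simp add: bh_class_coset)
  finally show ?thesis using some_rep[OF A] by simp
qed

lemma bh_smult_zero: "A \<in> carrier QH \<Longrightarrow> bh_smult G 0 A = \<zero>\<^bsub>QH\<^esub>"
proof -
  assume A: "A \<in> carrier QH"
  interpret h: ring_hom_ring "RG G" QH "(+>\<^bsub>RG G\<^esub>) (bh_ideal G)" by (rule QH_hom)
  have "ga_smult 0 (SOME x. x \<in> A) = \<zero>\<^bsub>RG G\<^esub>" by (simp add: ga_smult_def ga_zero_def)
  then have "bh_smult G 0 A = bh_ideal G +>\<^bsub>RG G\<^esub> \<zero>\<^bsub>RG G\<^esub>"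
    by (simp add: bh_smult_def bh_class_coset)
  then show ?thesis using h.hom_zero by simp
qed

lemma bh_one_Q: "bh_one G = \<one>\<^bsub>QH\<^esub>"
  by (simp add: bh_one_def bh_class_coset FactRing_def)

end


fun chebp :: "('a, 'b) ring_scheme \<Rightarrow> 'a \<Rightarrow> nat \<Rightarrow> 'a" where
  "chebp R t 0 = \<zero>\<^bsub>R\<^esub>"
| "chebp R t (Suc 0) = \<one>\<^bsub>R\<^esub>"
| "chebp R t (Suc (Suc j)) = t \<otimes>\<^bsub>R\<^esub> chebp R t (Suc j) \<ominus>\<^bsub>R\<^esub> chebp R t j"

lemma chebp_prop:
  assumes "Q (chebp R t 0)" "Q (chebp R t (Suc 0))"
    "\<And>j. Q (chebp R t j) \<Longrightarrow> Q (chebp R t (Suc j)) \<Longrightarrow> Q (chebp R t (Suc (Suc j)))"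
  shows "Q (chebp R t j)"
proof -
  have "Q (chebp R t j) \<and> Q (chebp R t (Suc j))"
    by (induction j) (use assms in auto)
  then show ?thesis by simp
qed

context ring
begin

definition cmt :: "'a \<Rightarrow> 'a \<Rightarrow> bool" where "cmt c x \<longleftrightarrow> c \<otimes> x = x \<otimes> c"

lemma cmt_mult: "c \<in> carrier R \<Longrightarrow> x \<in> carrier R \<Longrightarrow> y \<in> carrier R \<Longrightarrow> cmt c x \<Longrightarrow> cmt c y \<Longrightarrow> cmt c (x \<otimes> y)"
  unfolding cmt_def by (metis m_assoc)

lemma cmt_add: "c \<in> carrier R \<Longrightarrow> x \<in> carrier R \<Longrightarrow> y \<in> carrier R \<Longrightarrow> cmt c x \<Longrightarrow> cmt c y \<Longrightarrow> cmt c (x \<oplus> y)"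
  unfolding cmt_def by (simp add: l_distr r_distr)

lemma cmt_neg: "c \<in> carrier R \<Longrightarrow> x \<in> carrier R \<Longrightarrow> cmt c x \<Longrightarrow> cmt c (\<ominus> x)"
  unfolding cmt_def by (simp add: l_minus r_minus)

lemma cmt_minus: "c \<in> carrier R \<Longrightarrow> x \<in> carrier R \<Longrightarrow> y \<in> carrier R \<Longrightarrow> cmt c x \<Longrightarrow> cmt c y \<Longrightarrow> cmt c (x \<ominus> y)"
  by (simp add: minus_eq cmt_add cmt_neg)

lemma cmt_one: "c \<in> carrier R \<Longrightarrow> cmt c \<one>" unfolding cmt_def by simp
lemma cmt_zero: "c \<in> carrier R \<Longrightarrow> cmt c \<zero>" unfolding cmt_def by simp
lemma cmt_refl: "cmt c c" unfolding cmt_def by simp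
lemma cmt_sym: "cmt c x \<Longrightarrow> cmt x c" unfolding cmt_def by simp

lemma cmt_pow: "c \<in> carrier R \<Longrightarrow> x \<in> carrier R \<Longrightarrow> cmt c x \<Longrightarrow> cmt c (x [^] (j::nat))"
  by (induction j) (simp_all add: cmt_one cmt_mult)

lemma chebp_closed: "t \<in> carrier R \<Longrightarrow> chebp R t j \<in> carrier R"
  by (rule chebp_prop[where Q="\<lambda>x. x \<in> carrier R"]) simp_all

lemma chebp_cmt: "t \<in> carrier R \<Longrightarrow> x \<in> carrier R \<Longrightarrow> cmt t x \<Longrightarrow> cmt (chebp R t j) x"
proof (rule chebp_prop[where Q="\<lambda>y. cmt y x"])
  assume t: "t \<in> carrier R" and x: "x \<in> carrier R" and tx: "cmt t x"
  show "cmt (chebp R t 0) x" using x by (simp add: cmt_sym[OF cmt_zero])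
  show "cmt (chebp R t (Suc 0)) x" using x by (simp add: cmt_sym[OF cmt_one])
  fix j assume a: "cmt (chebp R t j) x" "cmt (chebp R t (Suc j)) x"
  have "cmt x (t \<otimes> chebp R t (Suc j) \<ominus> chebp R t j)"
    by (intro cmt_minus cmt_mult) (use t x tx a in \<open>simp_all add: chebp_closed cmt_sym\<close>)
  then show "cmt (chebp R t (Suc (Suc j))) x" by (simp add: cmt_sym)
qed

lemma chebp_S:
  assumes "\<one> \<in> S" "\<zero> \<in> S" "\<And>x y. x \<in> S \<Longrightarrow> y \<in> S \<Longrightarrow> x \<otimes> y \<in> S"
    "\<And>x y. x \<in> S \<Longrightarrow> y \<in> S \<Longrightarrow> x \<oplus> y \<in> S" "\<And>x. x \<in> S \<Longrightarrow> \<ominus> x \<in> S" "t \<in> S"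
  shows "chebp R t j \<in> S"
  by (rule chebp_prop[where Q="\<lambda>y. y \<in> S"]) (simp_all add: assms minus_eq)

end


locale bhk = ring R + Gr: group Gr for R (structure) and Gr :: "('g, 'c) monoid_scheme" +
  fixes \<phi> :: "'g \<Rightarrow> 'a"
  assumes phi_c: "\<And>g. g \<in> carrier Gr \<Longrightarrow> \<phi> g \<in> carrier R"
    and phi_m: "\<And>g h. g \<in> carrier Gr \<Longrightarrow> h \<in> carrier Gr \<Longrightarrow> \<phi> (g \<otimes>\<^bsub>Gr\<^esub> h) = \<phi> g \<otimes> \<phi> h"
    and phi_1: "\<phi> \<one>\<^bsub>Gr\<^esub> = \<one>"
    and central: "\<And>g h. g \<in> carrier Gr \<Longrightarrow> h \<in> carrier Gr \<Longrightarrow>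
        cmt (\<phi> g \<oplus> \<phi> (inv\<^bsub>Gr\<^esub> g)) (\<phi> h)"
begin

abbreviation "tr g \<equiv> \<phi> g \<oplus> \<phi> (inv\<^bsub>Gr\<^esub> g)"

lemma tr_c: "g \<in> carrier Gr \<Longrightarrow> tr g \<in> carrier R"
  by (simp add: phi_c)

lemma phi_pow: "g \<in> carrier Gr \<Longrightarrow> \<phi> (g [^]\<^bsub>Gr\<^esub> (j::nat)) = \<phi> g [^] j"
  by (induction j) (simp_all add: phi_1 phi_m)

lemma phi_inv_l: "g \<in> carrier Gr \<Longrightarrow> \<phi> (inv\<^bsub>Gr\<^esub> g) \<otimes> \<phi> g = \<one>"
  by (metis Gr.inv_closed Gr.l_inv phi_1 phi_m)

lemma phi_inv_r: "g \<in> carrier Gr \<Longrightarrow> \<phi> g \<otimes> \<phi> (inv\<^bsub>Gr\<^esub> g) = \<one>"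
  by (metis Gr.inv_closed Gr.r_inv phi_1 phi_m)

lemma inv_tr: "g \<in> carrier Gr \<Longrightarrow> \<phi> (inv\<^bsub>Gr\<^esub> g) = tr g \<ominus> \<phi> g"
proof -
  assume g: "g \<in> carrier Gr"
  have c: "\<phi> g \<in> carrier R" "\<phi> (inv\<^bsub>Gr\<^esub> g) \<in> carrier R" using g by (simp_all add: phi_c)
  then show ?thesis by algebra
qed

lemma sq_tr: "g \<in> carrier Gr \<Longrightarrow> \<phi> g \<otimes> \<phi> g = tr g \<otimes> \<phi> g \<ominus> \<one>"
proof -
  assume g: "g \<in> carrier Gr"
  have c: "\<phi> g \<in> carrier R" "\<phi> (inv\<^bsub>Gr\<^esub> g) \<in> carrier R" using g by (simp_all add: phi_c)
  have "tr g \<otimes> \<phi> g = \<phi> g \<otimes> \<phi> g \<oplus> \<phi> (inv\<^bsub>Gr\<^esub> g) \<otimes> \<phi> g" using c by algebra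
  also have "\<dots> = \<phi> g \<otimes> \<phi> g \<oplus> \<one>" using g by (simp add: phi_inv_l)
  finally show ?thesis using c by algebra
qed

lemma pow_cheb:
  assumes g: "g \<in> carrier Gr"
  shows "\<phi> g [^] (Suc j) = chebp R (tr g) (Suc j) \<otimes> \<phi> g \<ominus> chebp R (tr g) j"
proof (induction j)
  case 0
  have c: "\<phi> g \<in> carrier R" using phi_c[OF g] .
  then show ?case by simp algebra
next
  case (Suc j)
  let ?T = "tr g" and ?U = "\<phi> g"
  let ?P1 = "chebp R ?T (Suc j)" and ?P0 = "chebp R ?T j"
  have c: "?U \<in> carrier R" "?T \<in> carrier R" "?P1 \<in> carrier R" "?P0 \<in> carrier R"
    using g by (simp_all add: phi_c chebp_closed)
  have cm: "?P1 \<otimes> ?T = ?T \<otimes> ?P1"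
    using chebp_cmt[OF c(2) c(2) cmt_refl] unfolding cmt_def by simp
  have "\<phi> g [^] Suc (Suc j) = (?P1 \<otimes> ?U \<ominus> ?P0) \<otimes> ?U"
    using Suc by simp
  also have "\<dots> = ?P1 \<otimes> (?U \<otimes> ?U) \<ominus> ?P0 \<otimes> ?U" using c by algebra
  also have "\<dots> = ?P1 \<otimes> (?T \<otimes> ?U \<ominus> \<one>) \<ominus> ?P0 \<otimes> ?U" using g by (simp add: sq_tr)
  also have "\<dots> = (?P1 \<otimes> ?T) \<otimes> ?U \<ominus> ?P1 \<ominus> ?P0 \<otimes> ?U" using c by algebra simp
  also have "\<dots> = (?T \<otimes> ?P1) \<otimes> ?U \<ominus> ?P1 \<ominus> ?P0 \<otimes> ?U" by (simp only: cm)
  also have "\<dots> = (?T \<otimes> ?P1 \<ominus> ?P0) \<otimes> ?U \<ominus> ?P1" using c by algebra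
  finally show ?case by simp
qed


definition cq :: "'a \<Rightarrow> 'a \<Rightarrow> 'a \<Rightarrow> bool" where
  "cq Q x y \<longleftrightarrow> Q \<otimes> (x \<otimes> y) = Q \<otimes> (y \<otimes> x)"

lemma cq_sym: "cq Q x y \<Longrightarrow> cq Q y x" by (simp add: cq_def)

lemma cq_multL:
  assumes c: "Q \<in> carrier R" "x \<in> carrier R" "x' \<in> carrier R" "y \<in> carrier R"
    and Qx: "cmt Q x" and h1: "cq Q x y" and h2: "cq Q x' y"
  shows "cq Q (x \<otimes> x') y"
proof -
  have Qx': "Q \<otimes> x = x \<otimes> Q" using Qx by (simp add: cmt_def)
  have "Q \<otimes> ((x \<otimes> x') \<otimes> y) = (Q \<otimes> x) \<otimes> (x' \<otimes> y)" using c by (simp add: m_assoc)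
  also have "\<dots> = x \<otimes> (Q \<otimes> (x' \<otimes> y))" using c by (simp add: Qx' m_assoc)
  also have "\<dots> = x \<otimes> (Q \<otimes> (y \<otimes> x'))" using h2 by (simp add: cq_def)
  also have "\<dots> = (x \<otimes> Q) \<otimes> (y \<otimes> x')" using c by (simp add: m_assoc)
  also have "\<dots> = (Q \<otimes> x) \<otimes> (y \<otimes> x')" by (simp add: Qx')
  also have "\<dots> = (Q \<otimes> (x \<otimes> y)) \<otimes> x'" using c by (simp add: m_assoc)
  also have "\<dots> = (Q \<otimes> (y \<otimes> x)) \<otimes> x'" using h1 by (simp add: cq_def)
  also have "\<dots> = Q \<otimes> (y \<otimes> (x \<otimes> x'))" using c by (simp add: m_assoc)
  finally show ?thesis by (simp add: cq_def)
qed

lemma cq_add2: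
  assumes c: "Q \<in> carrier R" "x \<in> carrier R" "y \<in> carrier R" "y' \<in> carrier R"
    and h1: "cq Q x y" and h2: "cq Q x y'"
  shows "cq Q x (y \<oplus> y')"
proof -
  have "Q \<otimes> (x \<otimes> (y \<oplus> y')) = Q \<otimes> (x \<otimes> y) \<oplus> Q \<otimes> (x \<otimes> y')" using c by algebra
  also have "\<dots> = Q \<otimes> (y \<otimes> x) \<oplus> Q \<otimes> (y' \<otimes> x)" using h1 h2 by (simp add: cq_def)
  also have "\<dots> = Q \<otimes> ((y \<oplus> y') \<otimes> x)" using c by algebra
  finally show ?thesis by (simp add: cq_def)
qed

lemma cq_neg2:
  assumes c: "Q \<in> carrier R" "x \<in> carrier R" "y \<in> carrier R" and h1: "cq Q x y"
  shows "cq Q x (\<ominus> y)"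
proof -
  have "Q \<otimes> (x \<otimes> (\<ominus> y)) = \<ominus> (Q \<otimes> (x \<otimes> y))" using c by algebra
  also have "\<dots> = \<ominus> (Q \<otimes> (y \<otimes> x))" using h1 by (simp add: cq_def)
  also have "\<dots> = Q \<otimes> ((\<ominus> y) \<otimes> x)" using c by algebra
  finally show ?thesis by (simp add: cq_def)
qed

lemma cq_minus2:
  assumes c: "Q \<in> carrier R" "x \<in> carrier R" "y \<in> carrier R" "y' \<in> carrier R"
    and h1: "cq Q x y" and h2: "cq Q x y'"
  shows "cq Q x (y \<ominus> y')"
  unfolding minus_eq using c h1 h2 by (intro cq_add2 cq_neg2) auto

lemma cq_cmt: "cmt x y \<Longrightarrow> cq Q x y"
  by (simp add: cq_def cmt_def)

lemma cq_pow2: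
  assumes c: "Q \<in> carrier R" "x \<in> carrier R" "y \<in> carrier R" and Qy: "cmt Q y" and h: "cq Q x y"
  shows "cq Q x (y [^] (b::nat))"
proof (induction b)
  case 0 then show ?case using c by (simp add: cq_cmt cmt_one)
next
  case (Suc b)
  have "cq Q (y [^] b \<otimes> y) x"
    by (rule cq_multL) (use c Qy h Suc cq_sym cmt_pow in auto)
  then show ?case by (simp add: cq_sym)
qed

lemma cq_pows:
  assumes c: "Q \<in> carrier R" "x \<in> carrier R" "y \<in> carrier R" and Qx: "cmt Q x" and Qy: "cmt Q y"
    and h: "cq Q x y"
  shows "cq Q (x [^] (a::nat)) (y [^] (b::nat))"
proof (induction a)
  case 0 then show ?case using c by (simp add: cq_cmt cmt_sym[OF cmt_one])
next
  case (Suc a)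
  show ?case unfolding nat_pow_Suc
    by (rule cq_multL) (use c Qx Qy h Suc cq_pow2 cmt_pow in auto)
qed

lemma S_pow:
  assumes "\<one> \<in> S" "\<And>x y. x \<in> S \<Longrightarrow> y \<in> S \<Longrightarrow> x \<otimes> y \<in> S" "x \<in> S"
  shows "x [^] (j::nat) \<in> S"
  by (induction j) (simp_all add: assms)

lemma main_bhk:
  fixes u v :: 'g and r s :: nat and n k :: int
  assumes u: "u \<in> carrier Gr" and v: "v \<in> carrier Gr"
    and rel: "u [^]\<^bsub>Gr\<^esub> r = v [^]\<^bsub>Gr\<^esub> s"
    and r1: "1 \<le> r" and bez: "int s * n - int r * k = 1"
    and S1: "\<one> \<in> S" and S0: "\<zero> \<in> S"
    and Sm: "\<And>x y. x \<in> S \<Longrightarrow> y \<in> S \<Longrightarrow> x \<otimes> y \<in> S"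
    and Sa: "\<And>x y. x \<in> S \<Longrightarrow> y \<in> S \<Longrightarrow> x \<oplus> y \<in> S"
    and Sn: "\<And>x. x \<in> S \<Longrightarrow> \<ominus> x \<in> S"
    and ST: "tr u \<in> S"
    and SM: "\<phi> (u [^]\<^bsub>Gr\<^esub> n \<otimes>\<^bsub>Gr\<^esub> v [^]\<^bsub>Gr\<^esub> (-k)) \<in> S"
    and SMi: "\<phi> (inv\<^bsub>Gr\<^esub> (u [^]\<^bsub>Gr\<^esub> n \<otimes>\<^bsub>Gr\<^esub> v [^]\<^bsub>Gr\<^esub> (-k))) \<in> S"
  shows "\<phi> (v [^]\<^bsub>Gr\<^esub> s \<otimes>\<^bsub>Gr\<^esub> (inv\<^bsub>Gr\<^esub> (u [^]\<^bsub>Gr\<^esub> n \<otimes>\<^bsub>Gr\<^esub> v [^]\<^bsub>Gr\<^esub> (-k))) [^]\<^bsub>Gr\<^esub> (r * s)) \<in> S"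
proof -
  define m where "m = u [^]\<^bsub>Gr\<^esub> n \<otimes>\<^bsub>Gr\<^esub> v [^]\<^bsub>Gr\<^esub> (-k)"
  have mc: "m \<in> carrier Gr" using u v by (simp add: m_def)
  define U where "U = \<phi> u"
  define V where "V = \<phi> v"
  define Q where "Q = chebp R (tr u) r"
  define P' where "P' = chebp R (tr u) (r - 1)"
  define Z where "Z = \<phi> (u [^]\<^bsub>Gr\<^esub> r)"
  have Uc: "U \<in> carrier R" and Vc: "V \<in> carrier R" using u v by (simp_all add: U_def V_def phi_c)
  have Tc: "tr u \<in> carrier R" using u by (rule tr_c)
  have Qc: "Q \<in> carrier R" and P'c: "P' \<in> carrier R" using Tc by (simp_all add: Q_def P'_def chebp_closed)
  have Zc: "Z \<in> carrier R" using u by (simp add: Z_def phi_c)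
  have Qphi: "cmt Q (\<phi> h)" if "h \<in> carrier Gr" for h
    unfolding Q_def using that u by (intro chebp_cmt Tc phi_c central)
  have P'phi: "cmt P' (\<phi> h)" if "h \<in> carrier Gr" for h
    unfolding P'_def using that u by (intro chebp_cmt Tc phi_c central)
  have Qtr: "cmt Q (tr g)" if "g \<in> carrier Gr" for g
    using that by (intro cmt_add Qc phi_c Qphi) auto
  have Zeq: "Z = Q \<otimes> U \<ominus> P'"
  proof -
    have "Suc (r - 1) = r" using r1 by simp
    then show ?thesis using pow_cheb[OF u, of "r - 1"] u
      by (simp add: Z_def Q_def P'_def U_def phi_pow)
  qed
  have QU: "Q \<otimes> U = Z \<oplus> P'" using Zeq Qc Uc P'c Zc by simp algebra
  have ZV: "Z \<otimes> V = V \<otimes> Z"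
  proof -
    have "Z = V [^] s" using v by (simp add: Z_def rel V_def phi_pow)
    then show ?thesis using cmt_pow[OF Vc Vc cmt_refl, of s] by (simp add: cmt_def)
  qed
  have P'V: "P' \<otimes> V = V \<otimes> P'" using P'phi[OF v] by (simp add: cmt_def V_def)
  have QV: "Q \<otimes> V = V \<otimes> Q" using Qphi[OF v] by (simp add: cmt_def V_def)
  have cqUV: "cq Q U V"
  proof -
    have "Q \<otimes> (U \<otimes> V) = (Q \<otimes> U) \<otimes> V" using Qc Uc Vc by (simp add: m_assoc)
    also have "\<dots> = Z \<otimes> V \<oplus> P' \<otimes> V" using QU Zc P'c Vc by (simp add: l_distr)
    also have "\<dots> = V \<otimes> (Z \<oplus> P')" using ZV P'V Zc P'c Vc by (simp add: r_distr)
    also have "\<dots> = V \<otimes> (Q \<otimes> U)" by (simp add: QU)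
    also have "\<dots> = (V \<otimes> Q) \<otimes> U" using Qc Uc Vc by (simp add: m_assoc)
    also have "\<dots> = (Q \<otimes> V) \<otimes> U" by (simp add: QV)
    also have "\<dots> = Q \<otimes> (V \<otimes> U)" using Qc Uc Vc by (simp add: m_assoc)
    finally show ?thesis by (simp add: cq_def)
  qed
  define Ui where "Ui = \<phi> (inv\<^bsub>Gr\<^esub> u)"
  define Vi where "Vi = \<phi> (inv\<^bsub>Gr\<^esub> v)"
  have Uic: "Ui \<in> carrier R" and Vic: "Vi \<in> carrier R" using u v by (simp_all add: Ui_def Vi_def phi_c)
  have Ui_eq: "Ui = tr u \<ominus> U" unfolding Ui_def U_def by (rule inv_tr[OF u])
  have Vi_eq: "Vi = tr v \<ominus> V" unfolding Vi_def V_def by (rule inv_tr[OF v])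
  have Tvc: "tr v \<in> carrier R" using v by (rule tr_c)
  have cUTv: "cmt U (tr v)" unfolding U_def by (rule cmt_sym, rule central[OF v u])
  have cVTu: "cmt V (tr u)" unfolding V_def by (rule cmt_sym, rule central[OF u v])
  have cViTu: "cmt Vi (tr u)" unfolding Vi_def by (rule cmt_sym, rule central[OF u Gr.inv_closed[OF v]])
  have cqU_Vi: "cq Q U Vi"
    unfolding Vi_eq by (rule cq_minus2[OF Qc Uc Tvc Vc cq_cmt[OF cUTv] cqUV])
  have cqUi_V: "cq Q Ui V"
    unfolding Ui_eq by (rule cq_sym, rule cq_minus2[OF Qc Vc Tc Uc cq_cmt[OF cVTu] cq_sym[OF cqUV]])
  have cqUi_Vi: "cq Q Ui Vi"
    unfolding Ui_eq by (rule cq_sym, rule cq_minus2[OF Qc Vic Tc Uc cq_cmt[OF cViTu] cq_sym[OF cqU_Vi]])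
  have phi_ipow_u: "\<exists>a. (\<phi> (u [^]\<^bsub>Gr\<^esub> (i::int)) = U [^] (a::nat)) \<or> (\<phi> (u [^]\<^bsub>Gr\<^esub> i) = Ui [^] a)" for i
  proof (cases "i < 0")
    case True
    then have "u [^]\<^bsub>Gr\<^esub> i = inv\<^bsub>Gr\<^esub> (u [^]\<^bsub>Gr\<^esub> nat (-i))"
      by (subst int_pow_def2) simp
    also have "\<dots> = (inv\<^bsub>Gr\<^esub> u) [^]\<^bsub>Gr\<^esub> nat (-i)" by (rule Gr.nat_pow_inv[symmetric, OF u])
    finally have "u [^]\<^bsub>Gr\<^esub> i = (inv\<^bsub>Gr\<^esub> u) [^]\<^bsub>Gr\<^esub> nat (-i)" .
    then show ?thesis using u by (auto simp: Ui_def phi_pow)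
  next
    case False
    then have "u [^]\<^bsub>Gr\<^esub> i = u [^]\<^bsub>Gr\<^esub> nat i" by (subst int_pow_def2) simp
    then show ?thesis using u by (auto simp: U_def phi_pow)
  qed
  have phi_ipow_v: "\<exists>a. (\<phi> (v [^]\<^bsub>Gr\<^esub> (i::int)) = V [^] (a::nat)) \<or> (\<phi> (v [^]\<^bsub>Gr\<^esub> i) = Vi [^] a)" for i
  proof (cases "i < 0")
    case True
    then have "v [^]\<^bsub>Gr\<^esub> i = inv\<^bsub>Gr\<^esub> (v [^]\<^bsub>Gr\<^esub> nat (-i))"
      by (subst int_pow_def2) simp
    also have "\<dots> = (inv\<^bsub>Gr\<^esub> v) [^]\<^bsub>Gr\<^esub> nat (-i)" by (rule Gr.nat_pow_inv[symmetric, OF v])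
    finally have "v [^]\<^bsub>Gr\<^esub> i = (inv\<^bsub>Gr\<^esub> v) [^]\<^bsub>Gr\<^esub> nat (-i)" .
    then show ?thesis using v by (auto simp: Vi_def phi_pow)
  next
    case False
    then have "v [^]\<^bsub>Gr\<^esub> i = v [^]\<^bsub>Gr\<^esub> nat i" by (subst int_pow_def2) simp
    then show ?thesis using v by (auto simp: V_def phi_pow)
  qed
  have QU': "cmt Q U" "cmt Q Ui" "cmt Q V" "cmt Q Vi" using u v
    by (simp_all add: U_def Ui_def V_def Vi_def Qphi)
  have cq_uv: "cq Q (\<phi> (u [^]\<^bsub>Gr\<^esub> (i::int))) (\<phi> (v [^]\<^bsub>Gr\<^esub> (j::int)))" for i j
  proof -
    obtain a :: nat where a: "\<phi> (u [^]\<^bsub>Gr\<^esub> i) = U [^] a \<or> \<phi> (u [^]\<^bsub>Gr\<^esub> i) = Ui [^] a"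
      using phi_ipow_u[of i] by blast
    obtain b :: nat where b: "\<phi> (v [^]\<^bsub>Gr\<^esub> j) = V [^] b \<or> \<phi> (v [^]\<^bsub>Gr\<^esub> j) = Vi [^] b"
      using phi_ipow_v[of j] by blast
    show ?thesis
      using a b cq_pows[OF Qc Uc Vc QU'(1) QU'(3) cqUV]
        cq_pows[OF Qc Uc Vic QU'(1) QU'(4) cqU_Vi]
        cq_pows[OF Qc Uic Vc QU'(2) QU'(3) cqUi_V]
        cq_pows[OF Qc Uic Vic QU'(2) QU'(4) cqUi_Vi]
      by auto
  qed
  define X where "X = \<phi> (u [^]\<^bsub>Gr\<^esub> n)"
  define W where "W = \<phi> (v [^]\<^bsub>Gr\<^esub> (-k))"
  have Xc: "X \<in> carrier R" and Wc: "W \<in> carrier R" using u v by (simp_all add: X_def W_def phi_c)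
  have QX: "cmt Q X" using u by (simp add: X_def Qphi)
  have QW: "cmt Q W" using v by (simp add: W_def Qphi)
  have cqXWj: "cq Q X (W [^] (j::nat))" for j
    unfolding X_def W_def by (rule cq_pow2[OF Qc _ _ _ cq_uv]) (use u v QW[unfolded W_def] in \<open>simp_all add: phi_c\<close>)
  have Mphi: "\<phi> m = X \<otimes> W" using u v by (simp add: m_def X_def W_def phi_m)
  have powXW: "Q \<otimes> (X \<otimes> W) [^] j = Q \<otimes> (X [^] j \<otimes> W [^] j)" for j :: nat
  proof (induction j)
    case 0 then show ?case using Qc by simp
  next
    case (Suc j)
    have c: "X [^] j \<in> carrier R" "W [^] j \<in> carrier R" using Xc Wc by simp_all
    have QXj: "Q \<otimes> X [^] j = X [^] j \<otimes> Q" using cmt_pow[OF Qc Xc QX, of j] by (simp add: cmt_def)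
    have cqj: "Q \<otimes> (X \<otimes> W [^] j) = Q \<otimes> (W [^] j \<otimes> X)" using cqXWj[of j] by (simp add: cq_def)
    have "Q \<otimes> (X \<otimes> W) [^] Suc j = (Q \<otimes> (X \<otimes> W) [^] j) \<otimes> (X \<otimes> W)"
      using Qc Xc Wc by (simp add: m_assoc)
    also have "\<dots> = (Q \<otimes> (X [^] j \<otimes> W [^] j)) \<otimes> (X \<otimes> W)" by (simp add: Suc)
    also have "\<dots> = ((Q \<otimes> X [^] j) \<otimes> (W [^] j \<otimes> X)) \<otimes> W"
      using Qc Xc Wc c by (simp add: m_assoc)
    also have "\<dots> = ((X [^] j \<otimes> Q) \<otimes> (W [^] j \<otimes> X)) \<otimes> W" by (simp only: QXj)
    also have "\<dots> = X [^] j \<otimes> (Q \<otimes> (W [^] j \<otimes> X)) \<otimes> W"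
      using Qc Xc Wc c by (simp add: m_assoc)
    also have "\<dots> = X [^] j \<otimes> (Q \<otimes> (X \<otimes> W [^] j)) \<otimes> W" by (simp add: cqj)
    also have "\<dots> = ((X [^] j \<otimes> Q) \<otimes> X) \<otimes> (W [^] j \<otimes> W)"
      using Qc Xc Wc c by (simp add: m_assoc)
    also have "\<dots> = ((Q \<otimes> X [^] j) \<otimes> X) \<otimes> (W [^] j \<otimes> W)" by (simp only: QXj)
    also have "\<dots> = Q \<otimes> (X [^] Suc j \<otimes> W [^] Suc j)"
      using Qc Xc Wc c by (simp add: m_assoc)
    finally show ?case .
  qed
  have gid: "(u [^]\<^bsub>Gr\<^esub> n) [^]\<^bsub>Gr\<^esub> s \<otimes>\<^bsub>Gr\<^esub> (v [^]\<^bsub>Gr\<^esub> (-k)) [^]\<^bsub>Gr\<^esub> s = u"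
  proof -
    have e1: "(u [^]\<^bsub>Gr\<^esub> n) [^]\<^bsub>Gr\<^esub> s = u [^]\<^bsub>Gr\<^esub> (n * int s)"
      using u by (simp add: Gr.int_pow_pow int_pow_int[symmetric])
    have "(v [^]\<^bsub>Gr\<^esub> (-k)) [^]\<^bsub>Gr\<^esub> s = v [^]\<^bsub>Gr\<^esub> (int s * (-k))"
      using v by (simp add: Gr.int_pow_pow int_pow_int[symmetric] mult.commute)
    also have "\<dots> = (v [^]\<^bsub>Gr\<^esub> (int s)) [^]\<^bsub>Gr\<^esub> (-k)" using v by (simp add: Gr.int_pow_pow)
    also have "\<dots> = (u [^]\<^bsub>Gr\<^esub> (int r)) [^]\<^bsub>Gr\<^esub> (-k)" by (simp add: int_pow_int rel)
    also have "\<dots> = u [^]\<^bsub>Gr\<^esub> (int r * (-k))" using u by (simp add: Gr.int_pow_pow)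
    finally have e2: "(v [^]\<^bsub>Gr\<^esub> (-k)) [^]\<^bsub>Gr\<^esub> s = u [^]\<^bsub>Gr\<^esub> (int r * (-k))" .
    have "u [^]\<^bsub>Gr\<^esub> (n * int s) \<otimes>\<^bsub>Gr\<^esub> u [^]\<^bsub>Gr\<^esub> (int r * (-k)) = u [^]\<^bsub>Gr\<^esub> (n * int s + int r * (-k))"
      by (rule Gr.int_pow_mult[symmetric, OF u])
    also have "n * int s + int r * (-k) = 1" using bez by (simp add: algebra_simps)
    finally show ?thesis using u e1 e2 by simp
  qed
  have XsWs: "X [^] s \<otimes> W [^] s = U"
  proof -
    have "X [^] s \<otimes> W [^] s = \<phi> ((u [^]\<^bsub>Gr\<^esub> n) [^]\<^bsub>Gr\<^esub> s \<otimes>\<^bsub>Gr\<^esub> (v [^]\<^bsub>Gr\<^esub> (-k)) [^]\<^bsub>Gr\<^esub> s)"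
      using u v by (simp add: X_def W_def phi_m phi_pow)
    then show ?thesis by (simp add: gid U_def)
  qed
  have QMs: "Q \<otimes> \<phi> m [^] s = Q \<otimes> U" using powXW[of s] by (simp add: Mphi XsWs)
  have Mc: "\<phi> m \<in> carrier R" "\<phi> (inv\<^bsub>Gr\<^esub> m) \<in> carrier R" using mc by (simp_all add: phi_c)
  have "\<phi> (v [^]\<^bsub>Gr\<^esub> s \<otimes>\<^bsub>Gr\<^esub> (inv\<^bsub>Gr\<^esub> m) [^]\<^bsub>Gr\<^esub> (r * s)) = Z \<otimes> \<phi> (inv\<^bsub>Gr\<^esub> m) [^] (r * s)"
    using v mc by (simp add: phi_m phi_pow Z_def rel)
  also have "\<dots> = (Q \<otimes> \<phi> m [^] s \<oplus> \<ominus> P') \<otimes> \<phi> (inv\<^bsub>Gr\<^esub> m) [^] (r * s)"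
    by (simp add: Zeq QMs minus_eq)
  finally have fin: "\<phi> (v [^]\<^bsub>Gr\<^esub> s \<otimes>\<^bsub>Gr\<^esub> (inv\<^bsub>Gr\<^esub> m) [^]\<^bsub>Gr\<^esub> (r * s)) =
      (Q \<otimes> \<phi> m [^] s \<oplus> \<ominus> P') \<otimes> \<phi> (inv\<^bsub>Gr\<^esub> m) [^] (r * s)" .
  have QS: "Q \<in> S" unfolding Q_def by (rule chebp_S[OF S1 S0 Sm Sa Sn ST])
  have P'S: "P' \<in> S" unfolding P'_def by (rule chebp_S[OF S1 S0 Sm Sa Sn ST])
  have "(Q \<otimes> \<phi> m [^] s \<oplus> \<ominus> P') \<otimes> \<phi> (inv\<^bsub>Gr\<^esub> m) [^] (r * s) \<in> S"
    using SM SMi unfolding m_def[symmetric]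
    by (intro Sm Sa Sn QS P'S S_pow[OF S1 Sm])
  then show ?thesis using fin by (simp add: m_def)
qed

end


context group
begin

lemma phi_mult: "g \<in> carrier G \<Longrightarrow> h \<in> carrier G \<Longrightarrow>
  bh_class G (ga_delta (g \<otimes> h)) = bh_class G (ga_delta g) \<otimes>\<^bsub>QH\<^esub> bh_class G (ga_delta h)"
proof -
  assume g: "g \<in> carrier G" and h: "h \<in> carrier G"
  interpret hm: ring_hom_ring "RG G" QH "(+>\<^bsub>RG G\<^esub>) (bh_ideal G)" by (rule QH_hom)
  show ?thesis
    using hm.hom_mult[of "ga_delta g" "ga_delta h"] g h
    by (simp add: bh_class_coset delta_mult elems_delta)
qed

lemma phi_add: "f \<in> ga_elems G \<Longrightarrow> f' \<in> ga_elems G \<Longrightarrow>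
  bh_class G (ga_add f f') = bh_class G f \<oplus>\<^bsub>QH\<^esub> bh_class G f'"
proof -
  assume f: "f \<in> ga_elems G" and f': "f' \<in> ga_elems G"
  interpret hm: ring_hom_ring "RG G" QH "(+>\<^bsub>RG G\<^esub>) (bh_ideal G)" by (rule QH_hom)
  show ?thesis
    using hm.hom_add[of f f'] f f' by (simp add: bh_class_coset)
qed

lemma phi_central:
  assumes g: "g \<in> carrier G" and h: "h \<in> carrier G"
  shows "ring.cmt QH (bh_class G (ga_delta g) \<oplus>\<^bsub>QH\<^esub> bh_class G (ga_delta (inv g))) (bh_class G (ga_delta h))"
proof -
  interpret Q: ring QH by (rule QH_ring)
  interpret I: ideal "bh_ideal G" "RG G" by (rule bh_ideal_ideal)
  interpret hm: ring_hom_ring "RG G" QH "(+>\<^bsub>RG G\<^esub>) (bh_ideal G)" by (rule QH_hom)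
  define P where "P = ga_plusinv G g"
  have Pe: "P \<in> ga_elems G" using g by (simp add: P_def plusinv_elems)
  have de: "ga_delta h \<in> ga_elems G" using h by (simp add: elems_delta)
  have PP: "bh_class G P = bh_class G (ga_delta g) \<oplus>\<^bsub>QH\<^esub> bh_class G (ga_delta (inv g))"
    unfolding P_def ga_plusinv_def using g by (simp add: phi_add elems_delta)
  define x where "x = ga_add (ga_mult G (ga_delta h) P) (ga_smult (-1) (ga_mult G P (ga_delta h)))"
  have xI: "x \<in> bh_ideal G"
    unfolding bh_ideal_def x_def P_def
    by (rule ga_ideal.gen) (use g h in \<open>auto simp: bh_gens_def\<close>)
  have x2: "x = ga_delta h \<otimes>\<^bsub>RG G\<^esub> P \<oplus>\<^bsub>RG G\<^esub> (\<ominus>\<^bsub>RG G\<^esub> (P \<otimes>\<^bsub>RG G\<^esub> ga_delta h))"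
    using Pe de by (simp add: x_def RG_minus elems_mult)
  have "bh_ideal G +>\<^bsub>RG G\<^esub> x = bh_ideal G"
    by (rule abelian_group.a_coset_join2[OF ring.is_abelian_group[OF ring_RG]])
       (use xI I.a_subset I.a_subgroup in auto)
  then have "bh_class G x = \<zero>\<^bsub>QH\<^esub>" by (simp add: bh_class_coset FactRing_def)
  moreover have "bh_class G x = bh_class G (ga_delta h) \<otimes>\<^bsub>QH\<^esub> bh_class G P \<ominus>\<^bsub>QH\<^esub> bh_class G P \<otimes>\<^bsub>QH\<^esub> bh_class G (ga_delta h)"
  proof -
    have c: "P \<in> carrier (RG G)" "ga_delta h \<in> carrier (RG G)" using Pe de by simp_all
    have c2: "ga_delta h \<otimes>\<^bsub>RG G\<^esub> P \<in> carrier (RG G)" "P \<otimes>\<^bsub>RG G\<^esub> ga_delta h \<in> carrier (RG G)"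
      using c by (simp_all del: RG_simps)
    show ?thesis
      unfolding x2 bh_class_coset using c c2
      by (simp add: Q.minus_eq hm.hom_add hm.hom_mult del: RG_simps)
  qed
  ultimately have eq0: "bh_class G (ga_delta h) \<otimes>\<^bsub>QH\<^esub> bh_class G P \<ominus>\<^bsub>QH\<^esub> bh_class G P \<otimes>\<^bsub>QH\<^esub> bh_class G (ga_delta h) = \<zero>\<^bsub>QH\<^esub>"
    by simp
  have "bh_class G (ga_delta h) \<otimes>\<^bsub>QH\<^esub> bh_class G P = bh_class G P \<otimes>\<^bsub>QH\<^esub> bh_class G (ga_delta h)"
  proof -
    define a where "a = bh_class G (ga_delta h) \<otimes>\<^bsub>QH\<^esub> bh_class G P"
    define b where "b = bh_class G P \<otimes>\<^bsub>QH\<^esub> bh_class G (ga_delta h)"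
    have ab: "a \<in> carrier QH" "b \<in> carrier QH" using Pe de class_carrier by (simp_all add: a_def b_def)
    have "a = (a \<ominus>\<^bsub>QH\<^esub> b) \<oplus>\<^bsub>QH\<^esub> b" using ab by (simp add: Q.minus_eq Q.a_assoc Q.l_neg)
    also have "\<dots> = b" using eq0 ab by (simp add: a_def b_def)
    finally show ?thesis by (simp add: a_def b_def)
  qed
  then show ?thesis by (simp add: Q.cmt_def PP)
qed

lemma bhk_inst: "bhk QH G (\<lambda>g. bh_class G (ga_delta g))"
proof (intro bhk.intro bhk_axioms.intro)
  show "ring QH" by (rule QH_ring)
  show "group G" by (rule is_group)
  fix g h assume g: "g \<in> carrier G"
  then show "bh_class G (ga_delta g) \<in> carrier QH" by (simp add: class_carrier elems_delta)
  assume h: "h \<in> carrier G"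
  show "bh_class G (ga_delta (g \<otimes> h)) = bh_class G (ga_delta g) \<otimes>\<^bsub>QH\<^esub> bh_class G (ga_delta h)"
    using g h by (rule phi_mult)
  show "ring.cmt QH (bh_class G (ga_delta g) \<oplus>\<^bsub>QH\<^esub> bh_class G (ga_delta (inv g))) (bh_class G (ga_delta h))"
    using g h by (rule phi_central)
next
  show "bh_class G (ga_delta \<one>) = \<one>\<^bsub>QH\<^esub>" using bh_one_Q by (simp add: bh_one_def)
qed

end


theorem theorem5p1:
  fixes r s :: nat and k n :: int
  assumes "2 \<le> r" and "r < s" and "coprime r s"
    and "- int r * k + int s * n = 1"
  shows "bh_condition (torus_knot_group r s)
           (tk_class r s (tk_meridian_word k n))
           (tk_class r s (tk_longitude_word r s k n))"
proof -
  let ?G = "torus_knot_group r s"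
  let ?Q = "RG ?G Quot bh_ideal ?G"
  interpret G: group ?G by (rule tk_group)
  interpret Q: ring ?Q by (rule G.QH_ring)
  interpret B: bhk ?Q ?G "\<lambda>g. bh_class ?G (ga_delta g)" by (rule G.bhk_inst)
  define u where "u = tk_class r s [tk_u]"
  define v where "v = tk_class r s [tk_v]"
  have u: "u \<in> carrier ?G" and v: "v \<in> carrier ?G" by (simp_all add: u_def v_def tk_carrier)
  define m where "m = u [^]\<^bsub>?G\<^esub> n \<otimes>\<^bsub>?G\<^esub> v [^]\<^bsub>?G\<^esub> (-k)"
  have mer: "tk_class r s (tk_meridian_word k n) = m"
  proof -
    have "tk_class r s (tk_meridian_word k n) = tk_class r s (tk_lpow tk_u n) \<otimes>\<^bsub>?G\<^esub> tk_class r s (tk_lpow tk_v (-k))"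
      by (simp only: tk_meridian_word_def tk_mult)
    then show ?thesis by (simp only: tk_lpow m_def u_def v_def)
  qed
  have mc: "m \<in> carrier ?G" using u v by (simp add: m_def)
  have lon: "tk_class r s (tk_longitude_word r s k n) = v [^]\<^bsub>?G\<^esub> s \<otimes>\<^bsub>?G\<^esub> (inv\<^bsub>?G\<^esub> m) [^]\<^bsub>?G\<^esub> (r * s)"
  proof -
    have im: "inv\<^bsub>?G\<^esub> m = tk_class r s (tk_winv (tk_meridian_word k n))"
      by (simp add: mer[symmetric] tk_inv)
    have "tk_class r s (tk_longitude_word r s k n) = tk_class r s (replicate s tk_v) \<otimes>\<^bsub>?G\<^esub>
        tk_class r s (concat (replicate (r * s) (tk_winv (tk_meridian_word k n))))"
      by (simp only: tk_longitude_word_def tk_mult)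
    also have "tk_class r s (replicate s tk_v) = v [^]\<^bsub>?G\<^esub> s" by (simp only: tk_rep_pow v_def)
    also have "tk_class r s (concat (replicate (r * s) (tk_winv (tk_meridian_word k n)))) = (inv\<^bsub>?G\<^esub> m) [^]\<^bsub>?G\<^esub> (r * s)"
      by (simp only: im tk_pow)
    finally show ?thesis .
  qed
  have rel: "u [^]\<^bsub>?G\<^esub> r = v [^]\<^bsub>?G\<^esub> s"
  proof -
    have "tk_rel r s ([] @ replicate r tk_u @ []) ([] @ replicate s tk_v @ [])" by (rule tk_rel.relator)
    then have "tk_class r s (replicate r tk_u) = tk_class r s (replicate s tk_v)"
      by (simp add: tk_class_eq_iff)
    then show ?thesis by (simp only: u_def v_def tk_rep_pow)
  qed
  have bez: "int s * n - int r * k = 1" using assms(4) by simp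
  have r1: "1 \<le> r" using assms(1) by simp
  define Sg where "Sg = bh_plus ?G \<union> {bh_class ?G (ga_delta m), bh_class ?G (ga_delta (inv\<^bsub>?G\<^esub> m))}"
  define AG where "AG = alg_gen (bh_add ?G) (bh_mult ?G) (bh_smult ?G) (bh_one ?G) Sg"
  define S where "S = AG \<inter> carrier ?Q"
  have S1: "\<one>\<^bsub>?Q\<^esub> \<in> S"
  proof -
    have "bh_one ?G \<in> AG" unfolding AG_def by (rule alg_gen.one)
    then show ?thesis by (simp add: S_def G.bh_one_Q)
  qed
  have S0: "\<zero>\<^bsub>?Q\<^esub> \<in> S"
  proof -
    have "bh_smult ?G 0 (bh_one ?G) \<in> AG" unfolding AG_def by (intro alg_gen.smult alg_gen.one)
    then show ?thesis by (simp add: S_def G.bh_smult_zero G.bh_one_Q)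
  qed
  have Sm: "x \<otimes>\<^bsub>?Q\<^esub> y \<in> S" if "x \<in> S" "y \<in> S" for x y
  proof -
    have "bh_mult ?G x y \<in> AG" using that unfolding S_def AG_def by (intro alg_gen.mult) auto
    then show ?thesis using that by (simp add: S_def G.bh_mult_Q)
  qed
  have Sa: "x \<oplus>\<^bsub>?Q\<^esub> y \<in> S" if "x \<in> S" "y \<in> S" for x y
  proof -
    have "bh_add ?G x y \<in> AG" using that unfolding S_def AG_def by (intro alg_gen.add) auto
    then show ?thesis using that by (simp add: S_def G.bh_add_Q)
  qed
  have Sn: "\<ominus>\<^bsub>?Q\<^esub> x \<in> S" if "x \<in> S" for x
  proof -
    have "bh_smult ?G (-1) x \<in> AG" using that unfolding S_def AG_def by (intro alg_gen.smult) auto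
    then show ?thesis using that by (simp add: S_def G.bh_smult_neg)
  qed
  have ST: "bh_class ?G (ga_delta u) \<oplus>\<^bsub>?Q\<^esub> bh_class ?G (ga_delta (inv\<^bsub>?G\<^esub> u)) \<in> S"
  proof -
    have e: "bh_class ?G (ga_delta u) \<oplus>\<^bsub>?Q\<^esub> bh_class ?G (ga_delta (inv\<^bsub>?G\<^esub> u)) = bh_class ?G (ga_plusinv ?G u)"
      unfolding ga_plusinv_def using u by (simp add: G.phi_add G.elems_delta)
    have "bh_class ?G (ga_plusinv ?G u) \<in> bh_plus ?G"
      unfolding bh_plus_def bh_subalg_def by (rule alg_gen.gen) (use u in auto)
    then have "bh_class ?G (ga_plusinv ?G u) \<in> AG" unfolding AG_def Sg_def by (intro alg_gen.gen) auto
    moreover have "bh_class ?G (ga_plusinv ?G u) \<in> carrier ?Q"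
      using u by (simp add: G.class_carrier G.plusinv_elems)
    ultimately show ?thesis by (simp add: e S_def)
  qed
  have SM: "bh_class ?G (ga_delta m) \<in> S"
  proof -
    have "bh_class ?G (ga_delta m) \<in> AG" unfolding AG_def Sg_def by (intro alg_gen.gen) auto
    then show ?thesis using mc by (simp add: S_def G.class_carrier G.elems_delta)
  qed
  have SMi: "bh_class ?G (ga_delta (inv\<^bsub>?G\<^esub> m)) \<in> S"
  proof -
    have "bh_class ?G (ga_delta (inv\<^bsub>?G\<^esub> m)) \<in> AG" unfolding AG_def Sg_def by (intro alg_gen.gen) auto
    then show ?thesis using mc by (simp add: S_def G.class_carrier G.elems_delta)
  qed
  have "bh_class ?G (ga_delta (v [^]\<^bsub>?G\<^esub> s \<otimes>\<^bsub>?G\<^esub> (inv\<^bsub>?G\<^esub> m) [^]\<^bsub>?G\<^esub> (r * s))) \<in> S"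
    unfolding m_def
    by (rule B.main_bhk[OF u v rel r1 bez S1 S0 Sm Sa Sn ST SM[unfolded m_def] SMi[unfolded m_def]])
  then have "bh_class ?G (ga_delta (tk_class r s (tk_longitude_word r s k n))) \<in> AG"
    by (simp add: lon S_def)
  then show ?thesis
    unfolding bh_condition_def bh_subalg_def AG_def Sg_def mer by simp
qed


end
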